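(* In $Y_R(\mathfrak{so}_3)$, writing $e_{-1,0}(u)=\sum_{r\ge1}e^{(r)}_{-1,0}u^{-r}$, $$e_{-1,1}(u)=[e^{(1)}_{-1,0},e_{-1,0}(u)]-e_{-1,0}(u)^2.$$
   Context: Let $e_{ij}$ ($i,j\in\{-1,0,1\}$) be the matrix units of $\mathrm{End}\,\mathbb{C}^3$, with rows and columns indexed by $-1,0,1$. Let $P=\sum_{i,j}e_{ij}\otimes e_{ji}$, $Q=\sum_{i,j}e_{ij}\otimes e_{-i,-j}$ and $R(u)=1-\frac{P}{u}+\frac{Q}{u-\frac12}$. Let $t$ be the transposition on $\mathrm{End}\,\mathbb{C}^3$ given by $(e_{ij})^t=e_{-j,-i}$. The algebra $Y_R(\mathfrak{so}_3)$ is the unital associative algebra over $\mathbb{C}$ generated by elements $t_{ij}^{(r)}$, $r\ge 1$, $i,j\in\{-1,0,1\}$; put $t_{ij}(u)=\delta_{ij}+\sum_{r\ge1}t^{(r)}_{ij}u^{-r}$, $T(u)=\sum_{i,j}t_{ij}(u)\otimes e_{ij}$, $T^t(u)=\sum_{i,j}t_{ij}(u)\otimes e_{-j,-i}$, $T_1(u)=\sum t_{ij}(u)\otimes e_{ij}\otimes 1$, $T_2(v)=\sum t_{ij}(v)\otimes 1\otimes e_{ij}$. The defining relations are $R(u-v)T_1(u)T_2(v)=T_2(v)T_1(u)R(u-v)$ and $T(u)T^t(u+\frac12)=T^t(u+\frac12)T(u)=1$. The Gauss generators are the unique series $k_i(u)\in 1+u^{-1}Y_R(\mathfrak{so}_3)[[u^{-1}]]$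 ($i=-1,0,1$) and $e_{ij}(u),f_{ji}(u)\in u^{-1}Y_R(\mathfrak{so}_3)[[u^{-1}]]$ ($-1\le i<j\le1$) such that $T(u)=F(u)K(u)E(u)$, where $F(u)$ is the lower unitriangular matrix with below-diagonal entries $F_{0,-1}=f_{0,-1}(u)$, $F_{1,-1}=f_{1,-1}(u)$, $F_{1,0}=f_{1,0}(u)$, $K(u)=\mathrm{diag}(k_{-1}(u),k_0(u),k_1(u))$, and $E(u)$ is the upper unitriangular matrix with above-diagonal entries $E_{-1,0}=e_{-1,0}(u)$, $E_{-1,1}=e_{-1,1}(u)$, $E_{0,1}=e_{01}(u)$ (rows/columns indexed by $-1,0,1$). *)

theory Defs
  imports Main "HOL.Real_Vector_Spaces"
begin

definition idx :: "int set" where "idx = {-1, 0, 1}"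

(* One-variable series in u^{-1}: represented by coefficient function nat => 'a
   (value at n = coefficient of u^{-n}). *)

(* t_{ij}(u) = delta_ij + sum_{r>=1} t_ij^(r) u^{-r}; g i j r is the generator t_ij^(r) (r >= 1) *)
definition tser :: "(int \<Rightarrow> int \<Rightarrow> nat \<Rightarrow> 'a::real_algebra_1) \<Rightarrow> int \<Rightarrow> int \<Rightarrow> nat \<Rightarrow> 'a" where
  "tser g i j r = (if r = 0 then (if i = j then 1 else 0) else g i j r)"

definition cmul :: "(nat \<Rightarrow> 'a::ring_1) \<Rightarrow> (nat \<Rightarrow> 'a) \<Rightarrow> nat \<Rightarrow> 'a" where
  "cmul f h n = (\<Sum>p\<le>n. f p * h (n - p))"

definition one_ser :: "nat \<Rightarrow> 'a::ring_1" where
  "one_ser n = (if n = 0 then 1 else 0)"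

(* f(u + 1/2) re-expanded in u^{-1}, using (u+1/2)^{-r} = sum_k binom(-r,k) (1/2)^k u^{-r-k} *)
definition shift_half :: "(nat \<Rightarrow> 'a::real_algebra_1) \<Rightarrow> nat \<Rightarrow> 'a" where
  "shift_half f n = (if n = 0 then f 0 else
     (\<Sum>r\<in>{1..n}. ((-1) ^ (n - r) * real ((n - 1) choose (n - r)) * (1/2) ^ (n - r)) *\<^sub>R f r))"

(* Two-variable objects: F m n = coefficient of u^m v^n (m, n integers) *)

(* multiplication by w = u - v *)
definition wmul :: "(int \<Rightarrow> int \<Rightarrow> 'a::real_algebra_1) \<Rightarrow> int \<Rightarrow> int \<Rightarrow> 'a" where
  "wmul F = (\<lambda>m n. F (m - 1) n - F m (n - 1))"

definition whmul :: "(int \<Rightarrow> int \<Rightarrow> 'a::real_algebra_1) \<Rightarrow> int \<Rightarrow> int \<Rightarrow> 'a" where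
  "whmul F = (\<lambda>m n. wmul F m n - (1/2) *\<^sub>R F m n)"

(* entry ((a,b),(c,d)) of T_1(u) T_2(v): t_ac(u) t_bd(v) *)
definition XX :: "(int \<Rightarrow> int \<Rightarrow> nat \<Rightarrow> 'a::real_algebra_1) \<Rightarrow> int \<Rightarrow> int \<Rightarrow> int \<Rightarrow> int \<Rightarrow> int \<Rightarrow> int \<Rightarrow> 'a" where
  "XX g a b c d = (\<lambda>m n. if m \<le> 0 \<and> n \<le> 0
       then tser g a c (nat (-m)) * tser g b d (nat (-n)) else 0)"

(* entry ((a,b),(c,d)) of T_2(v) T_1(u): t_bd(v) t_ac(u) *)
definition YY :: "(int \<Rightarrow> int \<Rightarrow> nat \<Rightarrow> 'a::real_algebra_1) \<Rightarrow> int \<Rightarrow> int \<Rightarrow> int \<Rightarrow> int \<Rightarrow> int \<Rightarrow> int \<Rightarrow> 'a" where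
  "YY g a b c d = (\<lambda>m n. if m \<le> 0 \<and> n \<le> 0
       then tser g b d (nat (-n)) * tser g a c (nat (-m)) else 0)"

(* entry ((i,k),(j,l)) of  w(w-1/2) R(w) T_1(u) T_2(v),
   where w(w-1/2) R(w) = w(w-1/2) - (w-1/2) P + w Q *)
definition rtt_lhs :: "(int \<Rightarrow> int \<Rightarrow> nat \<Rightarrow> 'a::real_algebra_1) \<Rightarrow> int \<Rightarrow> int \<Rightarrow> int \<Rightarrow> int \<Rightarrow> int \<Rightarrow> int \<Rightarrow> 'a" where
  "rtt_lhs g i k j l = (\<lambda>m n.
      wmul (whmul (XX g i k j l)) m n
    - whmul (XX g k i j l) m n
    + (if k = - i then wmul (\<lambda>m' n'. \<Sum>a\<in>idx. XX g a (-a) j l m' n') m n else 0))"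

(* entry ((i,k),(j,l)) of  T_2(v) T_1(u) w(w-1/2) R(w) *)
definition rtt_rhs :: "(int \<Rightarrow> int \<Rightarrow> nat \<Rightarrow> 'a::real_algebra_1) \<Rightarrow> int \<Rightarrow> int \<Rightarrow> int \<Rightarrow> int \<Rightarrow> int \<Rightarrow> int \<Rightarrow> 'a" where
  "rtt_rhs g i k j l = (\<lambda>m n.
      wmul (whmul (YY g i k j l)) m n
    - whmul (YY g i k l j) m n
    + (if l = - j then wmul (\<lambda>m' n'. \<Sum>a\<in>idx. YY g i k a (-a) m' n') m n else 0))"

definition yangian_rel :: "(int \<Rightarrow> int \<Rightarrow> nat \<Rightarrow> 'a::real_algebra_1) \<Rightarrow> bool" where
  "yangian_rel g \<longleftrightarrow>
     (\<forall>i\<in>idx. \<forall>k\<in>idx. \<forall>j\<in>idx. \<forall>l\<in>idx. rtt_lhs g i k j l = rtt_rhs g i k j l)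
   \<and> (\<forall>i\<in>idx. \<forall>j\<in>idx.
        (\<lambda>n. \<Sum>a\<in>idx. cmul (tser g i a) (shift_half (tser g (-j) (-a))) n)
          = (if i = j then one_ser else (\<lambda>_. 0)))
   \<and> (\<forall>i\<in>idx. \<forall>j\<in>idx.
        (\<lambda>n. \<Sum>a\<in>idx. cmul (shift_half (tser g (-a) (-i))) (tser g a j) n)
          = (if i = j then one_ser else (\<lambda>_. 0)))"

definition Fmat :: "(int \<Rightarrow> int \<Rightarrow> nat \<Rightarrow> 'a::ring_1) \<Rightarrow> int \<Rightarrow> int \<Rightarrow> nat \<Rightarrow> 'a" where
  "Fmat f i a = (if i = a then one_ser else if a < i then f i a else (\<lambda>_. 0))"

definition Emat :: "(int \<Rightarrow> int \<Rightarrow> nat \<Rightarrow> 'a::ring_1) \<Rightarrow> int \<Rightarrow> int \<Rightarrow> nat \<Rightarrow> 'a" where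
  "Emat e a j = (if a = j then one_ser else if a < j then e a j else (\<lambda>_. 0))"

(* T(u) = F(u) K(u) E(u), with k_a in 1 + u^{-1}A[[u^{-1}]], e_ij, f_ji in u^{-1}A[[u^{-1}]] *)
definition gauss_dec :: "(int \<Rightarrow> int \<Rightarrow> nat \<Rightarrow> 'a::real_algebra_1) \<Rightarrow> (int \<Rightarrow> nat \<Rightarrow> 'a)
     \<Rightarrow> (int \<Rightarrow> int \<Rightarrow> nat \<Rightarrow> 'a) \<Rightarrow> (int \<Rightarrow> int \<Rightarrow> nat \<Rightarrow> 'a) \<Rightarrow> bool" where
  "gauss_dec g k e f \<longleftrightarrow>
     (\<forall>a\<in>idx. k a 0 = 1)
   \<and> (\<forall>i\<in>idx. \<forall>j\<in>idx. i < j \<longrightarrow> e i j 0 = 0 \<and> f j i 0 = 0)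
   \<and> (\<forall>i\<in>idx. \<forall>j\<in>idx.
        tser g i j = (\<lambda>n. \<Sum>a\<in>idx. cmul (cmul (Fmat f i a) (k a)) (Emat e a j) n))"

end

theory Submission
  imports Defs "HOL-Computational_Algebra.Formal_Power_Series"
begin
unbundle fps_syntax


lemma rtt_at:
  assumes "yangian_rel g" "i \<in> idx" "k \<in> idx" "j \<in> idx" "l \<in> idx"
  shows "rtt_lhs g i k j l 1 (- int n) = rtt_rhs g i k j l 1 (- int n)"
  using assms unfolding yangian_rel_def by metis

lemma tser0[simp]: "tser g i j 0 = (if i = j then 1 else 0)" by (simp add: tser_def)
lemma tser1[simp]: "tser g i j (Suc 0) = g i j 1" by (simp add: tser_def)
lemma natS[simp]: "nat (1 + int n) = Suc n" by simp

lemma c1: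
  fixes g :: "int \<Rightarrow> int \<Rightarrow> nat \<Rightarrow> 'a::real_algebra_1"
  assumes "yangian_rel g"
  shows "g (-1) 0 1 * tser g (-1) 0 n = tser g (-1) 0 n * g (-1) 0 1 + tser g (-1) 1 n"
proof -
  have "rtt_lhs g (-1) (-1) 0 0 1 (- int n) = rtt_rhs g (-1) (-1) 0 0 1 (- int n)"
    by (rule rtt_at[OF assms]) (auto simp: idx_def)
  then show ?thesis
    by (simp add: rtt_lhs_def rtt_rhs_def wmul_def whmul_def XX_def YY_def idx_def)
qed

lemma c2:
  fixes g :: "int \<Rightarrow> int \<Rightarrow> nat \<Rightarrow> 'a::real_algebra_1"
  assumes "yangian_rel g"
  shows "g (-1) 0 1 * tser g (-1) (-1) n = tser g (-1) (-1) n * g (-1) 0 1 - tser g (-1) 0 n"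
proof -
  have "rtt_lhs g (-1) (-1) 0 (-1) 1 (- int n) = rtt_rhs g (-1) (-1) 0 (-1) 1 (- int n)"
    by (rule rtt_at[OF assms]) (auto simp: idx_def)
  then show ?thesis
    by (simp add: rtt_lhs_def rtt_rhs_def wmul_def whmul_def XX_def YY_def idx_def)
qed



lemma fps_cancel:
  fixes K D :: "'a::ring_1 fps"
  assumes K0: "K $ 0 = 1" and KD: "K * D = 0"
  shows "D = 0"
proof -
  have "D $ n = 0" for n
  proof (induction n rule: less_induct)
    case (less n)
    have s: "(\<Sum>i=Suc 0..n. K$i * D$(n - i)) = 0"
      by (rule sum.neutral) (auto simp: less)
    have "0 = (K * D) $ n" using KD by simp
    also have "\<dots> = K$0 * D$n + (\<Sum>i=Suc 0..n. K$i * D$(n - i))"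
      unfolding fps_mult_nth by (simp add: sum.atLeast_Suc_atMost)
    finally show ?case using s K0 by simp
  qed
  then show ?thesis by (simp add: fps_ext)
qed

lemma cmul_fps: "cmul f h = (\<lambda>n. (Abs_fps f * Abs_fps h) $ n)"
  by (simp add: cmul_def fps_mult_nth atLeast0AtMost fun_eq_iff)

lemma cmul_one: "cmul one_ser h = h"
proof
  fix n
  have "cmul one_ser h n = (\<Sum>p\<le>n. if p = 0 then h (n - p) else 0)"
    unfolding cmul_def by (rule sum.cong) (auto simp: one_ser_def)
  then show "cmul one_ser h n = h n" by simp
qed

lemma cmul_zero: "cmul (\<lambda>_. 0) h = (\<lambda>_. 0)"
  by (simp add: cmul_def fun_eq_iff)

lemma gauss_row:
  assumes "gauss_dec g k e f" "j \<in> idx"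
  shows "tser g (-1) j = cmul (k (-1)) (Emat e (-1) j)"
proof -
  have "tser g (-1) j = (\<lambda>n. \<Sum>a\<in>idx. cmul (cmul (Fmat f (-1) a) (k a)) (Emat e a j) n)"
    using assms unfolding gauss_dec_def by (auto simp: idx_def)
  also have "\<dots> = cmul (k (-1)) (Emat e (-1) j)"
    by (simp add: idx_def Fmat_def cmul_one cmul_zero)
  finally show ?thesis .
qed


lemma Abs_one_ser: "Abs_fps one_ser = (1 :: 'a::ring_1 fps)"
  by (simp add: fps_eq_iff one_ser_def)

theorem lemma3p9:
  fixes g :: "int \<Rightarrow> int \<Rightarrow> nat \<Rightarrow> 'a::real_algebra_1"
    and k :: "int \<Rightarrow> nat \<Rightarrow> 'a"
    and e f :: "int \<Rightarrow> int \<Rightarrow> nat \<Rightarrow> 'a"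
  assumes "yangian_rel g"
    and "gauss_dec g k e f"
  shows "e (-1) 1 = (\<lambda>n. e (-1) 0 1 * e (-1) 0 n - e (-1) 0 n * e (-1) 0 1
                          - cmul (e (-1) 0) (e (-1) 0) n)"
proof -
  define K where "K = Abs_fps (k (-1))"
  define E0 where "E0 = Abs_fps (e (-1) 0)"
  define E1 where "E1 = Abs_fps (e (-1) 1)"
  define x where "x = g (-1) 0 1"
  define X where "X = fps_const x"
  have k0: "k (-1) 0 = 1" using assms(2) unfolding gauss_dec_def by (auto simp: idx_def)
  have e0: "e (-1) 0 0 = 0" using assms(2) unfolding gauss_dec_def by (auto simp: idx_def)
  have Tm: "tser g (-1) (-1) = (\<lambda>n. K $ n)"
    using gauss_row[OF assms(2), of "-1"] by (simp add: idx_def Emat_def Abs_one_ser cmul_fps K_def)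
  have T0: "tser g (-1) 0 = (\<lambda>n. (K * E0) $ n)"
    using gauss_row[OF assms(2), of 0] by (simp add: idx_def Emat_def cmul_fps K_def E0_def)
  have T1: "tser g (-1) 1 = (\<lambda>n. (K * E1) $ n)"
    using gauss_row[OF assms(2), of 1] by (simp add: idx_def Emat_def cmul_fps K_def E1_def)
  have xe: "x = e (-1) 0 1"
  proof -
    have "x = tser g (-1) 0 (Suc 0)" by (simp add: x_def)
    also have "\<dots> = e (-1) 0 1" using T0 k0 e0 by (simp add: K_def E0_def)
    finally show ?thesis .
  qed
  have h1: "X * (K * E0) = (K * E0) * X + K * E1"
    using c1[OF assms(1)] unfolding T0 T1 by (simp add: fps_eq_iff X_def x_def)
  have h2: "X * K = K * X - K * E0"
    using c2[OF assms(1)] unfolding Tm T0 by (simp add: fps_eq_iff X_def x_def)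
  have "K * E1 = (X * K - K * X) * E0 + K * (X * E0 - E0 * X)"
    using h1 by (simp add: algebra_simps)
  also have "\<dots> = - (K * E0) * E0 + K * (X * E0 - E0 * X)"
    using h2 by simp
  also have "\<dots> = K * (X * E0 - E0 * X - E0 * E0)"
    by (simp add: algebra_simps)
  finally have "K * (E1 - (X * E0 - E0 * X - E0 * E0)) = 0"
    by (simp add: algebra_simps)
  hence "E1 - (X * E0 - E0 * X - E0 * E0) = 0"
    by (rule fps_cancel[rotated]) (simp add: K_def k0)
  hence E1eq: "E1 = X * E0 - E0 * X - E0 * E0" by simp
  show ?thesis
  proof
    fix n
    have "e (-1) 1 n = E1 $ n" by (simp add: E1_def)
    also have "\<dots> = (X * E0 - E0 * X - E0 * E0) $ n" by (simp add: E1eq)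
    also have "\<dots> = e (-1) 0 1 * e (-1) 0 n - e (-1) 0 n * e (-1) 0 1
                          - cmul (e (-1) 0) (e (-1) 0) n"
      by (simp add: X_def E0_def xe cmul_fps)
    finally show "e (-1) 1 n = e (-1) 0 1 * e (-1) 0 n - e (-1) 0 n * e (-1) 0 1
                          - cmul (e (-1) 0) (e (-1) 0) n" .
  qed
qed

end
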